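(* Let $A=\{2,3,5,7,11,\dots\}$ be the set of all prime numbers. For every positive integer $n$, $$\sum_{k=1}^{n}N^p_A(k)\big(q^e_A(n-k)-q^o_A(n-k)\big)=\Omega(n),$$ where $\Omega(n)$ denotes the number of distinct prime divisors of $n$.
   Context: For a set $A$ of positive integers, $N^p_A(n)$ is the total number of parts, summed over all partitions of $n$ with parts in $A$. $q^e_A(m)$ (resp. $q^o_A(m)$) is the number of partitions of $m$ into pairwise distinct parts from $A$ with an even (resp. odd) number of parts; $q^e_A(0)=1$, $q^o_A(0)=0$. *)

theory Defs
  imports Main "HOL-Library.Multiset" "HOL-Computational_Algebra.Primes"
begin

definition partitions_in :: "nat set \<Rightarrow> nat \<Rightarrow> nat multiset set" where
  "partitions_in A n = {M. set_mset M \<subseteq> A \<and> sum_mset M = n}"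

definition Np :: "nat set \<Rightarrow> nat \<Rightarrow> nat" where
  "Np A n = (\<Sum>M\<in>partitions_in A n. size M)"

definition distinct_partitions_in :: "nat set \<Rightarrow> nat \<Rightarrow> nat set set" where
  "distinct_partitions_in A m = {S. finite S \<and> S \<subseteq> A \<and> \<Sum>S = m}"

definition qe :: "nat set \<Rightarrow> nat \<Rightarrow> nat" where
  "qe A m = card {S \<in> distinct_partitions_in A m. even (card S)}"

definition qo :: "nat set \<Rightarrow> nat \<Rightarrow> nat" where
  "qo A m = card {S \<in> distinct_partitions_in A m. odd (card S)}"

end

theory Submission imports Defs "HOL-Computational_Algebra.Formal_Power_Series" begin

definition Idx :: "nat \<Rightarrow> nat \<Rightarrow> nat set" where
  "Idx a m = {i. i \<le> m \<and> a dvd (m - i)}"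

lemma part_decomp:
  assumes "a \<notin> B" "a > 0"
  shows "partitions_in (insert a B) m =
    (\<Union>i\<in>Idx a m. (\<lambda>M. M + replicate_mset ((m-i) div a) a) ` partitions_in B i)"
proof
  show "partitions_in (insert a B) m \<subseteq> (\<Union>i\<in>Idx a m. (\<lambda>M. M + replicate_mset ((m-i) div a) a) ` partitions_in B i)"
  proof
    fix M assume M: "M \<in> partitions_in (insert a B) m"
    define M0 where "M0 = filter_mset (\<lambda>x. x \<noteq> a) M"
    define j where "j = count M a"
    have eq: "M = M0 + replicate_mset j a"
      unfolding M0_def j_def by (metis filter_eq_replicate_mset multiset_partition add.commute)
    have s0: "set_mset M0 \<subseteq> B" using M unfolding M0_def partitions_in_def by auto
    have "sum_mset M = sum_mset M0 + j * a" by (subst eq) (simp add: sum_mset_replicate_mset)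
    then have sm: "sum_mset M0 + j * a = m" using M unfolding partitions_in_def by simp
    hence "sum_mset M0 \<in> Idx a m" "(m - sum_mset M0) div a = j" using assms(2) unfolding Idx_def by auto
    moreover have "M0 \<in> partitions_in B (sum_mset M0)" using s0 unfolding partitions_in_def by auto
    ultimately show "M \<in> (\<Union>i\<in>Idx a m. (\<lambda>M. M + replicate_mset ((m-i) div a) a) ` partitions_in B i)"
      using eq by blast
  qed
next
  show "(\<Union>i\<in>Idx a m. (\<lambda>M. M + replicate_mset ((m-i) div a) a) ` partitions_in B i) \<subseteq> partitions_in (insert a B) m"
  proof clarify
    fix i M assume i: "i \<in> Idx a m" and M: "M \<in> partitions_in B i"
    have "sum_mset M = i" "set_mset M \<subseteq> B" using M unfolding partitions_in_def by auto
    moreover have "(m - i) div a * a = m - i" using i unfolding Idx_def by auto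
    ultimately show "M + replicate_mset ((m - i) div a) a \<in> partitions_in (insert a B) m"
      using i unfolding partitions_in_def Idx_def by (auto simp: sum_mset_replicate_mset)
  qed
qed

lemma part_disj:
  assumes "a \<notin> B" "a > 0" "i \<in> Idx a m" "i' \<in> Idx a m" "i \<noteq> i'"
  shows "(\<lambda>M. M + replicate_mset ((m-i) div a) a) ` partitions_in B i \<inter>
         (\<lambda>M. M + replicate_mset ((m-i') div a) a) ` partitions_in B i' = {}"
proof (rule ccontr)
  assume "\<not> ?thesis"
  then obtain M M' where M: "M \<in> partitions_in B i" and M': "M' \<in> partitions_in B i'"
    and e: "M + replicate_mset ((m-i) div a) a = M' + replicate_mset ((m-i') div a) a" by blast
  have "count M a = 0" "count M' a = 0" using M M' assms(1) unfolding partitions_in_def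
    by (auto simp: count_eq_zero_iff)
  then have "(m-i) div a = (m-i') div a" using arg_cong[OF e, of "\<lambda>X. count X a"] by simp
  then have "M = M'" using e by simp
  then show False using M M' assms(5) unfolding partitions_in_def by auto
qed

lemma finite_Idx: "finite (Idx a m)" unfolding Idx_def by auto

lemma finite_part: "finite B \<Longrightarrow> 0 \<notin> B \<Longrightarrow> finite (partitions_in B m)"
proof (induction B arbitrary: m rule: finite_induct)
  case empty
  have "partitions_in {} m \<subseteq> {{#}}" unfolding partitions_in_def by auto
  then show ?case using finite_subset by blast
next
  case (insert a B)
  then have "a > 0" by auto
  show ?case using insert by (subst part_decomp[OF insert(2) \<open>a>0\<close>]) (auto simp: finite_Idx)
qed

lemma card_part_insert:
  assumes "finite B" "0 \<notin> B" "a \<notin> B" "a > 0"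
  shows "card (partitions_in (insert a B) m) = (\<Sum>i\<in>Idx a m. card (partitions_in B i))"
  apply (subst part_decomp[OF assms(3,4)])
  apply (subst card_UN_disjoint)
  using finite_part[OF assms(1,2)] part_disj[OF assms(3,4)] finite_Idx
     apply auto
  apply (rule sum.cong, simp)
  apply (rule card_image)
  by (simp add: inj_on_def)

lemma Np_insert:
  assumes "finite B" "0 \<notin> B" "a \<notin> B" "a > 0"
  shows "Np (insert a B) m = (\<Sum>i\<in>Idx a m. Np B i + card (partitions_in B i) * ((m - i) div a))"
  unfolding Np_def
  apply (subst part_decomp[OF assms(3,4)])
  apply (subst sum.UNION_disjoint)
  using finite_part[OF assms(1,2)] part_disj[OF assms(3,4)] finite_Idx
     apply auto
  apply (rule sum.cong, simp)
  apply (subst sum.reindex)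
   apply (simp add: inj_on_def)
  by (simp add: sum.distrib)


definition sgnsum :: "nat set \<Rightarrow> nat \<Rightarrow> int" where
  "sgnsum B m = (\<Sum>S\<in>distinct_partitions_in B m. (-1) ^ card S)"

lemma finite_dp: "finite B \<Longrightarrow> finite (distinct_partitions_in B m)"
  by (rule finite_subset[of _ "Pow B"]) (auto simp: distinct_partitions_in_def)

lemma sgnsum_qe_qo:
  assumes "finite B"
  shows "int (qe B m) - int (qo B m) = sgnsum B m"
proof -
  let ?D = "distinct_partitions_in B m"
  have fin: "finite ?D" using finite_dp[OF assms] .
  have "?D = {S\<in>?D. even (card S)} \<union> {S\<in>?D. odd (card S)}" by auto
  then have "sgnsum B m = (\<Sum>S\<in>{S\<in>?D. even (card S)}. (-1) ^ card S) + (\<Sum>S\<in>{S\<in>?D. odd (card S)}. (-1) ^ card S)"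
    unfolding sgnsum_def using fin by (metis (no_types, lifting) sum.union_disjoint finite_Un disjoint_iff mem_Collect_eq)
  also have "\<dots> = (\<Sum>S\<in>{S\<in>?D. even (card S)}. 1) + (\<Sum>S\<in>{S\<in>?D. odd (card S)}. -1)"
    by (intro arg_cong2[where f="(+)"] sum.cong) auto
  finally show ?thesis unfolding qe_def qo_def by simp
qed

lemma dp_split1: "a \<notin> B \<Longrightarrow> {S\<in>distinct_partitions_in (insert a B) m. a \<notin> S} = distinct_partitions_in B m"
  unfolding distinct_partitions_in_def by auto

lemma dp_split2:
  assumes "a \<notin> B" "a \<le> m"
  shows "{S\<in>distinct_partitions_in (insert a B) m. a \<in> S} = insert a ` distinct_partitions_in B (m - a)"
proof (intro equalityI subsetI)
  fix S assume S: "S \<in> {S\<in>distinct_partitions_in (insert a B) m. a \<in> S}"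
  then have "finite S" "a \<in> S" "S \<subseteq> insert a B" "\<Sum>S = m" unfolding distinct_partitions_in_def by auto
  then have "S - {a} \<in> distinct_partitions_in B (m - a)" "S = insert a (S - {a})"
    unfolding distinct_partitions_in_def using assms by (auto simp: sum.remove)
  then show "S \<in> insert a ` distinct_partitions_in B (m - a)" by blast
next
  fix S assume "S \<in> insert a ` distinct_partitions_in B (m - a)"
  then obtain T where "S = insert a T" "finite T" "T \<subseteq> B" "\<Sum>T = m - a" unfolding distinct_partitions_in_def by auto
  moreover have "a \<notin> T" using \<open>T \<subseteq> B\<close> assms by auto
  ultimately show "S \<in> {S\<in>distinct_partitions_in (insert a B) m. a \<in> S}"
    using assms unfolding distinct_partitions_in_def by auto
qed

lemma dp_split3:
  assumes "m < a"
  shows "{S\<in>distinct_partitions_in (insert a B) m. a \<in> S} = {}"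
  using assms unfolding distinct_partitions_in_def
  by (auto dest: member_le_sum[of a _ "\<lambda>x. x"])

lemma sgnsum_insert:
  assumes "finite B" "a \<notin> B"
  shows "sgnsum (insert a B) m = sgnsum B m - (if m < a then 0 else sgnsum B (m - a))"
proof -
  let ?D = "distinct_partitions_in (insert a B) m"
  let ?D1 = "{S\<in>?D. a \<notin> S}" and ?D2 = "{S\<in>?D. a \<in> S}"
  have fin: "finite ?D" using finite_dp assms by blast
  have eqD: "?D = ?D1 \<union> ?D2" by blast
  have "sgnsum (insert a B) m = (\<Sum>S\<in>?D1. (-1) ^ card S) + (\<Sum>S\<in>?D2. (-1) ^ card S)"
    unfolding sgnsum_def
    apply (subst eqD)
    apply (rule sum.union_disjoint)
    using fin by auto
  also have "(\<Sum>S\<in>?D1. (-1) ^ card S) = sgnsum B m"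
    unfolding sgnsum_def dp_split1[OF assms(2)] ..
  also have "(\<Sum>S\<in>?D2. (-1::int) ^ card S) = - (if m < a then 0 else sgnsum B (m - a))"
  proof (cases "m < a")
    case True
    then show ?thesis by (simp add: dp_split3)
  next
    case False
    then have "a \<le> m" by simp
    have "(\<Sum>S\<in>?D2. (-1::int) ^ card S) = (\<Sum>T\<in>distinct_partitions_in B (m - a). (-1) ^ card (insert a T))"
      unfolding dp_split2[OF assms(2) \<open>a \<le> m\<close>]
      apply (rule sum.reindex_cong[OF _ refl refl])
      unfolding inj_on_def distinct_partitions_in_def using assms(2)
      by clarify (metis insert_ident subsetD)
    also have "\<dots> = (\<Sum>T\<in>distinct_partitions_in B (m - a). - ((-1) ^ card T))"
      apply (rule sum.cong[OF refl])
      subgoal for T using assms(2) unfolding distinct_partitions_in_def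
        by (subgoal_tac "a \<notin> T") auto
      done
    finally show ?thesis using False unfolding sgnsum_def by (simp add: sum_negf)
  qed
  finally show ?thesis by simp
qed


definition fP :: "nat set \<Rightarrow> int fps" where "fP B = Abs_fps (\<lambda>m. int (card (partitions_in B m)))"
definition fN :: "nat set \<Rightarrow> int fps" where "fN B = Abs_fps (\<lambda>m. int (Np B m))"
definition fD :: "nat set \<Rightarrow> int fps" where "fD B = Abs_fps (sgnsum B)"
definition fT :: "nat set \<Rightarrow> int fps" where
  "fT B = Abs_fps (\<lambda>m. if m = 0 then 0 else int (card {b\<in>B. b dvd m}))"
definition G :: "nat \<Rightarrow> int fps" where "G a = Abs_fps (\<lambda>k. if a dvd k then 1 else 0)"
definition H :: "nat \<Rightarrow> int fps" where "H a = Abs_fps (\<lambda>k. if a dvd k then int (k div a) else 0)"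

lemma Idx_eq: "Idx a m = {0..m} \<inter> {i. a dvd (m - i)}" unfolding Idx_def by auto

lemma fP_insert:
  assumes "finite B" "0 \<notin> B" "a \<notin> B" "a > 0"
  shows "fP (insert a B) = fP B * G a"
proof (rule fps_ext)
  fix m
  have "fps_nth (fP B * G a) m = (\<Sum>i=0..m. int (card (partitions_in B i)) * (if a dvd (m-i) then 1 else 0))"
    by (simp add: fps_mult_nth fP_def G_def)
  also have "\<dots> = (\<Sum>i\<in>Idx a m. int (card (partitions_in B i)))"
    unfolding Idx_eq by (subst sum.inter_restrict) (auto intro!: sum.cong)
  finally show "fps_nth (fP (insert a B)) m = fps_nth (fP B * G a) m"
    by (simp add: fP_def card_part_insert[OF assms])
qed

lemma fN_insert:
  assumes "finite B" "0 \<notin> B" "a \<notin> B" "a > 0"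
  shows "fN (insert a B) = fN B * G a + fP B * H a"
proof (rule fps_ext)
  fix m
  have "fps_nth (fN B * G a + fP B * H a) m = (\<Sum>i=0..m. int (Np B i) * (if a dvd (m-i) then 1 else 0)
      + int (card (partitions_in B i)) * (if a dvd (m-i) then int ((m-i) div a) else 0))"
    by (simp add: fps_mult_nth fP_def G_def fN_def H_def sum.distrib)
  also have "\<dots> = (\<Sum>i\<in>Idx a m. int (Np B i) + int (card (partitions_in B i)) * int ((m-i) div a))"
    unfolding Idx_eq by (subst sum.inter_restrict) (auto intro!: sum.cong)
  finally show "fps_nth (fN (insert a B)) m = fps_nth (fN B * G a + fP B * H a) m"
    by (simp add: fN_def Np_insert[OF assms])
qed

lemma fD_insert:
  assumes "finite B" "a \<notin> B"
  shows "fD (insert a B) = fD B * (1 - fps_X ^ a)"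
proof (rule fps_ext)
  fix m
  have "fD B * (1 - fps_X ^ a) = fD B - fps_X ^ a * fD B" by (simp add: algebra_simps)
  then show "fps_nth (fD (insert a B)) m = fps_nth (fD B * (1 - fps_X ^ a)) m"
    by (simp add: fps_X_power_mult_nth fD_def sgnsum_insert[OF assms])
qed

lemma G_inv: "a > 0 \<Longrightarrow> G a * (1 - fps_X ^ a) = 1"
proof (rule fps_ext)
  fix m assume "a > 0"
  have "G a * (1 - fps_X ^ a) = G a - fps_X ^ a * G a" by (simp add: algebra_simps)
  then show "fps_nth (G a * (1 - fps_X ^ a)) m = fps_nth 1 m" using \<open>a > 0\<close>
    by (auto simp: fps_X_power_mult_nth G_def dvd_diff_nat)
       (metis dvd_imp_le dvd_minus_self le_add_diff_inverse2 not_le dvd_add_right_iff)+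
qed

lemma H_inv: "a > 0 \<Longrightarrow> H a * (1 - fps_X ^ a) = fps_X ^ a * G a"
proof (rule fps_ext)
  fix m assume "a > 0"
  have "H a * (1 - fps_X ^ a) = H a - fps_X ^ a * H a" by (simp add: algebra_simps)
  show "fps_nth (H a * (1 - fps_X ^ a)) m = fps_nth (fps_X ^ a * G a) m"
  proof (cases "a dvd m")
    case True
    then obtain q where q: "m = a * q" by blast
    show ?thesis
    proof (cases "q = 0")
      case True then show ?thesis using q \<open>a>0\<close> \<open>H a * (1 - fps_X ^ a) = _\<close>
        by (simp add: fps_X_power_mult_nth G_def H_def)
    next
      case False
      then have "m - a = a * (q - 1)" "\<not> m < a" using q \<open>a>0\<close> by (auto simp: algebra_simps)
      then show ?thesis using q \<open>a>0\<close> False \<open>H a * (1 - fps_X ^ a) = _\<close>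
        by (simp add: fps_X_power_mult_nth G_def H_def)
    qed
  next
    case False
    then have "\<not> a dvd (m - a)" if "\<not> m < a" using that
      by (metis dvd_add_left_iff dvd_refl le_add_diff_inverse2 not_le)
    then show ?thesis using False \<open>H a * (1 - fps_X ^ a) = _\<close>
      by (simp add: fps_X_power_mult_nth G_def H_def)
  qed
qed


lemma fT_insert:
  assumes "finite B" "a \<notin> B" "a > 0"
  shows "fT (insert a B) = fT B + fps_X ^ a * G a"
proof (rule fps_ext)
  fix m
  have c: "card {b\<in>insert a B. b dvd m} = card {b\<in>B. b dvd m} + (if a dvd m then 1 else 0)"
  proof (cases "a dvd m")
    case True
    then have "{b\<in>insert a B. b dvd m} = insert a {b\<in>B. b dvd m}" by auto
    then show ?thesis using assms True by simp
  next
    case False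
    then have "{b\<in>insert a B. b dvd m} = {b\<in>B. b dvd m}" by auto
    then show ?thesis using False by simp
  qed
  have d: "(\<not> m < a \<and> a dvd (m - a)) \<longleftrightarrow> (m \<noteq> 0 \<and> a dvd m)"
    using assms(3) by (metis dvd_add_right_iff dvd_imp_le dvd_refl le_add_diff_inverse2 not_le
        bot_nat_0.not_eq_extremum dvd_minus_self)
  show "fps_nth (fT (insert a B)) m = fps_nth (fT B + fps_X ^ a * G a) m"
    using c d assms(3) by (auto simp: fT_def G_def fps_X_power_mult_nth)
qed

lemma part_empty: "partitions_in {} m = (if m = 0 then {{#}} else {})"
  unfolding partitions_in_def by auto

lemma dp_empty: "distinct_partitions_in {} m = (if m = 0 then {{}} else {})"
  unfolding distinct_partitions_in_def by auto

lemma main_fps: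
  assumes "finite B" "0 \<notin> B"
  shows "fP B * fD B = 1 \<and> fN B * fD B = fT B"
  using assms
proof (induction B rule: finite_induct)
  case empty
  have "fP {} = 1" by (rule fps_ext) (simp add: fP_def part_empty)
  moreover have "fD {} = 1" by (rule fps_ext) (simp add: fD_def sgnsum_def dp_empty)
  moreover have "fN {} = 0" by (rule fps_ext) (simp add: fN_def Np_def part_empty)
  moreover have "fT {} = 0" by (rule fps_ext) (simp add: fT_def)
  ultimately show ?case by simp
next
  case (insert a B)
  then have a: "a > 0" "0 \<notin> B" by auto
  have IH1: "fP B * fD B = 1" and IH2: "fN B * fD B = fT B" using insert a by auto
  have e1: "fP (insert a B) * fD (insert a B) = (fP B * fD B) * (G a * (1 - fps_X ^ a))"
    by (simp add: fP_insert[OF insert(1) a(2) insert(2) a(1)] fD_insert[OF insert(1,2)] algebra_simps)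
  have e2: "fN (insert a B) * fD (insert a B) = (fN B * fD B) * (G a * (1 - fps_X ^ a))
      + (fP B * fD B) * (H a * (1 - fps_X ^ a))"
    by (simp add: fN_insert[OF insert(1) a(2) insert(2) a(1)] fD_insert[OF insert(1,2)] algebra_simps)
  show ?case using e1 e2 IH1 IH2 G_inv[OF a(1)] H_inv[OF a(1)] fT_insert[OF insert(1,2) a(1)] by simp
qed


lemma part_restrict:
  assumes "k \<le> n"
  shows "partitions_in A k = partitions_in (A \<inter> {..n}) k"
proof -
  have "x \<le> n" if "x \<in># M" "sum_mset M = k" for x M
    using that assms sum_mset.remove[OF that(1)] by simp
  then show ?thesis unfolding partitions_in_def by auto
qed

lemma dp_restrict:
  assumes "k \<le> n"
  shows "distinct_partitions_in A k = distinct_partitions_in (A \<inter> {..n}) k"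
proof -
  have "x \<le> n" if "x \<in> S" "finite S" "\<Sum>S = k" for x S
    using that assms member_le_sum[of x S "\<lambda>x. x"] by simp
  then show ?thesis unfolding distinct_partitions_in_def by auto
qed

lemma Np_zero: "0 \<notin> B \<Longrightarrow> Np B 0 = 0"
proof -
  assume "0 \<notin> B"
  then have "partitions_in B 0 = {{#}}" unfolding partitions_in_def
    by (auto simp: sum_mset_0_iff) (metis all_not_in_conv set_mset_eq_empty_iff subsetD)
  then show ?thesis by (simp add: Np_def)
qed

theorem corollary6:
  fixes n :: nat
  assumes "n > 0"
  shows "(\<Sum>k=1..n. int (Np {p. prime p} k) *
            (int (qe {p. prime p} (n - k)) - int (qo {p. prime p} (n - k))))
         = int (card (prime_factors n))"
proof -
  define B where "B = {p::nat. prime p} \<inter> {..n}"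
  have finB: "finite B" and B0: "0 \<notin> B" unfolding B_def by auto
  have "fps_nth (fN B * fD B) n = fps_nth (fT B) n" using main_fps[OF finB B0] by simp
  then have eq: "(\<Sum>i=0..n. int (Np B i) * sgnsum B (n - i)) = int (card {b\<in>B. b dvd n})"
    using assms by (simp add: fps_mult_nth fN_def fD_def fT_def)
  have "(\<Sum>i=0..n. int (Np B i) * sgnsum B (n - i)) = (\<Sum>i=1..n. int (Np B i) * sgnsum B (n - i))"
    using Np_zero[OF B0] by (simp add: sum.atLeast_Suc_atMost)
  also have "\<dots> = (\<Sum>k=1..n. int (Np {p. prime p} k) *
            (int (qe {p. prime p} (n - k)) - int (qo {p. prime p} (n - k))))"
  proof (rule sum.cong[OF refl])
    fix k assume k: "k \<in> {1..n}"
    have "Np B k = Np {p. prime p} k" unfolding Np_def B_def using part_restrict[of k n] k by simp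
    moreover have "sgnsum B (n - k) = int (qe B (n - k)) - int (qo B (n - k))"
      by (simp add: sgnsum_qe_qo[OF finB])
    moreover have "qe B (n - k) = qe {p. prime p} (n - k)" "qo B (n - k) = qo {p. prime p} (n - k)"
      unfolding qe_def qo_def B_def using dp_restrict[of "n - k" n "{p. prime p}"] by simp_all
    ultimately show "int (Np B k) * sgnsum B (n - k) = int (Np {p. prime p} k) *
            (int (qe {p. prime p} (n - k)) - int (qo {p. prime p} (n - k)))" by simp
  qed
  finally have "(\<Sum>k=1..n. int (Np {p. prime p} k) *
            (int (qe {p. prime p} (n - k)) - int (qo {p. prime p} (n - k)))) = int (card {b\<in>B. b dvd n})"
    using eq by simp
  moreover have "{b\<in>B. b dvd n} = prime_factors n"
    using assms unfolding B_def by (auto simp: prime_factors_dvd dest: dvd_imp_le)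
  ultimately show ?thesis by simp
qed

end
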